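(* Let ${\mathfrak h}$ be an $n$-dimensional complex Hilbert space, $L:{\mathfrak h}\to{\mathfrak h}$ symmetric, $w\in{\mathfrak h}$, $\theta\in\mathbb R$, with $\{L^kw\}_{k=0}^{n-1}$ a basis of ${\mathfrak h}$, and let $p$ be the polynomial defined in the context. Then $$p(z)=(\theta z+1)\det(z^2-L)-z\sum_{j=1}^n\Big(\sum_{k=1}^ja_{j-k}\langle w,L^{k-1}w\rangle\Big)z^{2(n-j)},$$ where $a_0=1$ and $a_j:=(-1)^j\sum_{i_1<\dots<i_j}\lambda_{i_1}\cdots\lambda_{i_j}$ for $1\le j\le n$.
   Context: Under the basis assumption $L$ has $n$ distinct eigenvalues $\lambda_1,\dots,\lambda_n$; $V$ denotes the Vandermonde matrix $V_{ki}=\lambda_i^{k-1}$ ($1\le k,i\le n$). Define $p_1(z)=\theta z+1$, $p_k(z)=z^2p_{k-1}(z)-\langle w,L^{k-2}w\rangle z$ for $k\ge2$, and $p(z):=p_{n+1}(z)-\sum_{i,j=1}^n\lambda_i^n(V^{-1})_{ij}\,p_j(z)$. *)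

theory Defs
  imports "Jordan_Normal_Form.Gauss_Jordan_Elimination" "Jordan_Normal_Form.Char_Poly"
begin

definition cinner :: "complex vec \<Rightarrow> complex vec \<Rightarrow> complex" where
  "cinner v u = (\<Sum>i<dim_vec v. cnj (v $ i) * u $ i)"

definition hermitian_mat :: "nat \<Rightarrow> complex mat \<Rightarrow> bool" where
  "hermitian_mat n L \<longleftrightarrow> L \<in> carrier_mat n n \<and>
     (\<forall>i<n. \<forall>j<n. L $$ (i, j) = cnj (L $$ (j, i)))"

definition krylov_basis :: "nat \<Rightarrow> complex mat \<Rightarrow> complex vec \<Rightarrow> bool" where
  "krylov_basis n L w \<longleftrightarrow>
     (\<forall>v \<in> carrier_vec n. \<exists>c. \<forall>i<n. v $ i = (\<Sum>k<n. c k * ((L ^\<^sub>m k) *\<^sub>v w) $ i)) \<and>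
     (\<forall>c. (\<forall>i<n. (\<Sum>k<n. c k * ((L ^\<^sub>m k) *\<^sub>v w) $ i) = 0) \<longrightarrow> (\<forall>k<n. c k = 0))"

fun pk :: "complex mat \<Rightarrow> complex vec \<Rightarrow> real \<Rightarrow> nat \<Rightarrow> complex \<Rightarrow> complex" where
  "pk L w \<theta> 0 z = 0"
| "pk L w \<theta> (Suc 0) z = of_real \<theta> * z + 1"
| "pk L w \<theta> (Suc (Suc k)) z = z^2 * pk L w \<theta> (Suc k) z - cinner w ((L ^\<^sub>m k) *\<^sub>v w) * z"

(* Vandermonde matrix V_{ki} = lambda_i^{k-1}, 1 <= k,i <= n (stored 0-based) *)
definition vandermonde :: "nat \<Rightarrow> (nat \<Rightarrow> complex) \<Rightarrow> complex mat" where
  "vandermonde n lam = mat n n (\<lambda>(k, i). lam (i + 1) ^ k)"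

definition Vinv :: "nat \<Rightarrow> (nat \<Rightarrow> complex) \<Rightarrow> nat \<Rightarrow> nat \<Rightarrow> complex" where
  "Vinv n lam i j = the (mat_inverse (vandermonde n lam)) $$ (i - 1, j - 1)"

definition pfun :: "nat \<Rightarrow> complex mat \<Rightarrow> complex vec \<Rightarrow> real \<Rightarrow> (nat \<Rightarrow> complex) \<Rightarrow> complex \<Rightarrow> complex" where
  "pfun n L w \<theta> lam z = pk L w \<theta> (n + 1) z
     - (\<Sum>i\<in>{1..n}. \<Sum>j\<in>{1..n}. lam i ^ n * Vinv n lam i j * pk L w \<theta> j z)"

definition acoef :: "nat \<Rightarrow> (nat \<Rightarrow> complex) \<Rightarrow> nat \<Rightarrow> complex" where
  "acoef n lam j = (-1) ^ j * (\<Sum>S | S \<subseteq> {1..n} \<and> card S = j. \<Prod>i\<in>S. lam i)"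

end

theory Submission
  imports Defs
begin

lemma vieta:
  fixes x :: complex
  shows "(\<Prod>i\<in>{1..n}. x - lam i) = (\<Sum>m\<le>n. acoef n lam m * x^(n-m))"
proof -
  let ?A = "{1..n::nat}"
  have "(\<Prod>i\<in>?A. x - lam i) = (\<Prod>i\<in>?A. (- lam i) + x)" by simp
  also have "\<dots> = (\<Sum>X\<in>Pow ?A. (\<Prod>i\<in>X. - lam i) * (\<Prod>i\<in>?A-X. x))"
    by (rule prod_add) simp
  also have "\<dots> = (\<Sum>X\<in>Pow ?A. (-1)^card X * (\<Prod>i\<in>X. lam i) * x^(n - card X))"
  proof (rule sum.cong[OF refl])
    fix X assume X: "X \<in> Pow ?A"
    then have fX: "finite X" by (meson PowD finite_atLeastAtMost finite_subset)
    have "card (?A - X) = n - card X" using X by (simp add: card_Diff_subset fX)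
    moreover have "(\<Prod>i\<in>X. - lam i) = (-1)^card X * (\<Prod>i\<in>X. lam i)"
      by (simp add: prod_uminus)
    ultimately show "(\<Prod>i\<in>X. - lam i) * (\<Prod>i\<in>?A-X. x) = (-1)^card X * (\<Prod>i\<in>X. lam i) * x^(n - card X)"
      by simp
  qed
  also have "\<dots> = (\<Sum>m\<le>n. \<Sum>X\<in>{X. X \<in> Pow ?A \<and> card X = m}. (-1)^card X * (\<Prod>i\<in>X. lam i) * x^(n - card X))"
    by (rule sum.group[symmetric]) (auto intro: card_mono[of ?A, simplified])
  also have "\<dots> = (\<Sum>m\<le>n. acoef n lam m * x^(n-m))"
  proof (rule sum.cong[OF refl])
    fix m
    have "(\<Sum>X\<in>{X. X \<in> Pow ?A \<and> card X = m}. (-1)^card X * (\<Prod>i\<in>X. lam i) * x^(n - card X))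
       = (\<Sum>X\<in>{S. S \<subseteq> ?A \<and> card S = m}. (-1)^m * x^(n-m) * (\<Prod>i\<in>X. lam i))"
      by (rule sum.cong) (auto simp: mult_ac)
    also have "\<dots> = ((-1)^m * x^(n-m)) * (\<Sum>X\<in>{S. S \<subseteq> ?A \<and> card S = m}. (\<Prod>i\<in>X. lam i))"
      by (simp add: sum_distrib_left)
    also have "\<dots> = acoef n lam m * x^(n-m)"
      unfolding acoef_def by (simp add: mult_ac)
    finally show "(\<Sum>X\<in>{X. X \<in> Pow ?A \<and> card X = m}. (-1)^card X * (\<Prod>i\<in>X. lam i) * x^(n - card X)) = acoef n lam m * x^(n-m)" .
  qed
  finally show ?thesis .
qed

lemma det_char:
  fixes L :: "complex mat"
  assumes L: "L \<in> carrier_mat n n"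
    and eig: "lam ` {1..n} = {\<mu>. eigenvalue L \<mu>}"
    and dist: "inj_on lam {1..n}"
  shows "det (x \<cdot>\<^sub>m 1\<^sub>m n - L) = (\<Prod>i\<in>{1..n}. x - lam i)"
proof -
  have pc: "poly (char_poly L) x = det (x \<cdot>\<^sub>m 1\<^sub>m n - L)"
    unfolding char_poly_def
    by (rule poly_det_cong[of _ n], insert L, auto simp: char_poly_matrix_def)
  obtain as where as: "char_poly L = (\<Prod>a\<leftarrow>as. [:- a, 1:])" and len: "length as = n"
    using char_poly_factorized[OF L] by blast
  have sub: "lam ` {1..n} \<subseteq> set as"
  proof
    fix y assume "y \<in> lam ` {1..n}"
    then have "eigenvalue L y" using eig by auto
    then have "poly (char_poly L) y = 0" using eigenvalue_root_char_poly[OF L] by auto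
    then show "y \<in> set as" unfolding as poly_prod_list prod_list_zero_iff by auto
  qed
  have c1: "card (lam ` {1..n}) = n" using dist by (simp add: card_image)
  have c2: "card (set as) \<le> n" using card_length len by metis
  have eqs: "set as = lam ` {1..n}"
    using card_seteq[OF finite_set sub] c1 c2 by auto
  have "distinct as" using c1 c2 eqs len by (metis card_distinct)
  then have "(\<Prod>a\<leftarrow>as. [:- a, 1:]) = (\<Prod>a\<in>set as. [:- a, 1:])"
    by (simp add: prod.distinct_set_conv_list)
  also have "\<dots> = (\<Prod>i\<in>{1..n}. [:- lam i, 1:])"
    unfolding eqs using dist by (simp add: prod.reindex)
  finally have "char_poly L = (\<Prod>i\<in>{1..n}. [:- lam i, 1:])" using as by simp
  then have "poly (char_poly L) x = (\<Prod>i\<in>{1..n}. x - lam i)"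
    by (simp add: poly_prod)
  then show ?thesis using pc by simp
qed

lemma vandermonde_inv:
  assumes dist: "inj_on lam {1..n}"
  shows "\<exists>W. mat_inverse (vandermonde n lam) = Some W \<and> vandermonde n lam * W = 1\<^sub>m n \<and> W \<in> carrier_mat n n"
proof -
  let ?V = "vandermonde n lam"
  have V: "?V \<in> carrier_mat n n" unfolding vandermonde_def by simp
  have VT: "transpose_mat ?V \<in> carrier_mat n n" using V by simp
  have "det (transpose_mat ?V) \<noteq> 0"
  proof
    assume "det (transpose_mat ?V) = 0"
    then obtain v where v: "v \<in> carrier_vec n" "v \<noteq> 0\<^sub>v n" and Vv: "transpose_mat ?V *\<^sub>v v = 0\<^sub>v n"
      using det_0_iff_vec_prod_zero[OF VT] by blast
    define P where "P = (\<Sum>k<n. monom (v $ k) k)"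
    have polyP: "poly P t = (\<Sum>k<n. v $ k * t ^ k)" for t
      unfolding P_def by (simp add: poly_sum poly_monom)
    have coeffP: "coeff P k = (if k < n then v $ k else 0)" for k
      unfolding P_def by (simp add: coeff_sum coeff_monom)
    have roots: "poly P (lam i) = 0" if i: "i \<in> {1..n}" for i
    proof -
      have "i - 1 < n" using i by auto
      then have "(transpose_mat ?V *\<^sub>v v) $ (i - 1) = 0" using Vv by simp
      moreover have "Suc (i - 1) = i" using i by auto
      moreover have "(transpose_mat ?V *\<^sub>v v) $ (i - 1) = (\<Sum>k<n. v $ k * lam i ^ k)"
        using \<open>i - 1 < n\<close> v \<open>Suc (i - 1) = i\<close>
        by (simp add: vandermonde_def scalar_prod_def mult.commute lessThan_atLeast0)
      ultimately show ?thesis unfolding polyP by simp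
    qed
    show False
    proof (cases "P = 0")
      case True
      then have "v $ k = 0" if "k < n" for k using coeffP[of k] that by simp
      then have "v = 0\<^sub>v n" using v by (intro eq_vecI) auto
      then show False using v by simp
    next
      case False
      have "n > 0" using v by (cases n) (auto intro!: eq_vecI)
      have deg: "degree P \<le> n - 1" by (rule degree_le) (auto simp: coeffP)
      have "lam ` {1..n} \<subseteq> {x. poly P x = 0}" using roots by auto
      then have "card (lam ` {1..n}) \<le> card {x. poly P x = 0}"
        by (intro card_mono poly_roots_finite False)
      also have "\<dots> \<le> degree P" by (rule card_poly_roots_bound[OF False])
      finally show False using deg dist \<open>n > 0\<close> by (simp add: card_image)
    qed
  qed
  then have "det ?V \<noteq> 0" using det_transpose[OF V] by simp
  then have U: "?V \<in> Units (ring_mat TYPE(complex) n undefined)"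
    by (rule det_non_zero_imp_unit[OF V])
  then obtain W where "mat_inverse ?V = Some W"
    using mat_inverse(1)[OF V, of undefined] by (cases "mat_inverse ?V") auto
  then show ?thesis using mat_inverse(2)[OF V] by blast
qed

lemma acoef0: "acoef n lam 0 = 1"
proof -
  have "{S. S \<subseteq> {1..n} \<and> card S = 0} = {{}}"
    by (auto, metis card_0_eq empty_iff finite_atLeastAtMost finite_subset)
  then show ?thesis unfolding acoef_def by simp
qed

lemma root_rel:
  fixes x :: complex
  assumes "(\<Prod>i\<in>{1..n}. x - lam i) = 0"
  shows "x ^ n = (\<Sum>t<n. - acoef n lam (n - t) * x ^ t)"
proof -
  have "0 = (\<Sum>m\<le>n. acoef n lam m * x^(n-m))" using vieta[where x=x and n=n and lam=lam] assms by simp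
  also have "\<dots> = (\<Sum>m\<in>{0..n}. acoef n lam m * x^(n-m))" by (simp add: atMost_atLeast0)
  also have "\<dots> = (\<Sum>t\<in>{0..n}. acoef n lam (n - t) * x^(n-(n-t)))"
    by (subst sum.atLeastAtMost_rev) simp
  also have "\<dots> = (\<Sum>t<Suc n. acoef n lam (n - t) * x^t)"
    by (intro sum.cong) auto
  also have "\<dots> = (\<Sum>t<n. acoef n lam (n - t) * x^t) + x ^ n"
    by (simp add: acoef0)
  finally show ?thesis by (simp add: sum_negf eq_neg_iff_add_eq_0 add.commute)
qed

lemma beta:
  assumes dist: "inj_on lam {1..n}" and j: "j \<in> {1..n}"
  shows "(\<Sum>i\<in>{1..n}. lam i ^ n * Vinv n lam i j) = - acoef n lam (n + 1 - j)"
proof -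
  obtain W where W: "mat_inverse (vandermonde n lam) = Some W"
    and VW: "vandermonde n lam * W = 1\<^sub>m n" and Wc: "W \<in> carrier_mat n n"
    using vandermonde_inv[OF dist] by blast
  define g where "g t = - acoef n lam (n - t)" for t
  have root: "lam i ^ n = (\<Sum>t<n. g t * lam i ^ t)" if "i \<in> {1..n}" for i
    unfolding g_def by (rule root_rel) (use that in auto)
  have jn: "j - 1 < n" using j by auto
  have VWe: "(\<Sum>i<n. lam (Suc i) ^ t * W $$ (i, j - 1)) = (if t = j - 1 then 1 else 0)" if t: "t < n" for t
  proof -
    have "(vandermonde n lam * W) $$ (t, j - 1) = (\<Sum>i<n. lam (Suc i) ^ t * W $$ (i, j - 1))"
      using t jn Wc by (simp add: vandermonde_def scalar_prod_def lessThan_atLeast0)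
    then show ?thesis using VW t jn by simp
  qed
  have "(\<Sum>i\<in>{1..n}. lam i ^ n * Vinv n lam i j) = (\<Sum>i<n. lam (Suc i) ^ n * W $$ (i, j - 1))"
    by (simp add: Vinv_def W sum.atLeast1_atMost_eq)
  also have "\<dots> = (\<Sum>i<n. (\<Sum>t<n. g t * lam (Suc i) ^ t) * W $$ (i, j - 1))"
    by (intro sum.cong refl, subst root) auto
  also have "\<dots> = (\<Sum>t<n. g t * (\<Sum>i<n. lam (Suc i) ^ t * W $$ (i, j - 1)))"
  proof -
    have "(\<Sum>i<n. (\<Sum>t<n. g t * lam (Suc i) ^ t) * W $$ (i, j - 1))
        = (\<Sum>i<n. \<Sum>t<n. g t * (lam (Suc i) ^ t * W $$ (i, j - 1)))"
      unfolding sum_distrib_right by (simp add: mult_ac)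
    also have "\<dots> = (\<Sum>t<n. \<Sum>i<n. g t * (lam (Suc i) ^ t * W $$ (i, j - 1)))"
      by (rule sum.swap)
    also have "\<dots> = (\<Sum>t<n. g t * (\<Sum>i<n. lam (Suc i) ^ t * W $$ (i, j - 1)))"
      by (simp add: sum_distrib_left)
    finally show ?thesis .
  qed
  also have "\<dots> = (\<Sum>t<n. g t * (if t = j - 1 then 1 else 0))"
    by (intro sum.cong refl) (simp add: VWe[simplified])
  also have "\<dots> = (\<Sum>t<n. if t = j - 1 then g t else 0)"
    by (intro sum.cong refl) auto
  also have "\<dots> = g (j - 1)" using jn by simp
  also have "\<dots> = - acoef n lam (n + 1 - j)" using j unfolding g_def by (simp add: Suc_diff_le)
  finally show ?thesis .
qed

lemma pk_closed:
  "pk L w \<theta> (Suc k) z = z^(2*k) * (of_real \<theta> * z + 1)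
     - z * (\<Sum>m<k. cinner w ((L ^\<^sub>m m) *\<^sub>v w) * z^(2*(k-1-m)))"
proof (induction k)
  case 0
  then show ?case by simp
next
  case (Suc k)
  let ?c = "\<lambda>m. cinner w ((L ^\<^sub>m m) *\<^sub>v w)"
  have hs: "(\<Sum>m<Suc k. ?c m * z^(2*(Suc k-1-m))) = z^2 * (\<Sum>m<k. ?c m * z^(2*(k-1-m))) + ?c k"
  proof -
    have "(\<Sum>m<k. ?c m * z^(2*(Suc k-1-m))) = z^2 * (\<Sum>m<k. ?c m * z^(2*(k-1-m)))"
      unfolding sum_distrib_left
    proof (intro sum.cong refl)
      fix m assume "m \<in> {..<k}"
      then have "2*(Suc k-1-m) = 2 + 2*(k-1-m)" by auto
      then show "?c m * z^(2*(Suc k-1-m)) = z^2 * (?c m * z^(2*(k-1-m)))"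
        by (simp add: power_add power2_eq_square)
    qed
    then show ?thesis by simp
  qed
  moreover have e: "z^(2*Suc k) = z^2 * z^(2*k)" by (simp add: power_add[symmetric])
  show ?case
    unfolding pk.simps Suc.IH e hs by (simp add: ring_distribs mult_ac)
qed

lemma double_reindex:
  fixes a c :: "nat \<Rightarrow> complex" and z :: complex
  shows "(\<Sum>j\<le>n. \<Sum>m<j. a (n - j) * c m * z^(2*(j-1-m)))
       = (\<Sum>J\<in>{1..n}. (\<Sum>k\<in>{1..J}. a (J - k) * c (k - 1)) * z ^ (2 * (n - J)))"
proof -
  have "(\<Sum>j\<le>n. \<Sum>m<j. a (n - j) * c m * z^(2*(j-1-m)))
      = (\<Sum>(j,m)\<in>Sigma {..n} (\<lambda>j. {..<j}). a (n - j) * c m * z^(2*(j-1-m)))"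
    by (rule sum.Sigma) auto
  also have "\<dots> = (\<Sum>(J,k)\<in>Sigma {1..n} (\<lambda>J. {1..J}). a (J - k) * c (k - 1) * z ^ (2 * (n - J)))"
    by (rule sum.reindex_bij_witness[where i="\<lambda>(J,k). (n - J + k, k - 1)"
          and j="\<lambda>(j,m). (n - j + m + 1, m + 1)"]) (auto simp: Suc_diff_le)
  also have "\<dots> = (\<Sum>J\<in>{1..n}. \<Sum>k\<in>{1..J}. a (J - k) * c (k - 1) * z ^ (2 * (n - J)))"
    by (rule sum.Sigma[symmetric]) auto
  also have "\<dots> = (\<Sum>J\<in>{1..n}. (\<Sum>k\<in>{1..J}. a (J - k) * c (k - 1)) * z ^ (2 * (n - J)))"
    by (simp add: sum_distrib_right)
  finally show ?thesis .
qed

theorem lemma5p2: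
  fixes n :: nat and L :: "complex mat" and w :: "complex vec" and \<theta> :: real
    and lam :: "nat \<Rightarrow> complex"
  assumes herm: "hermitian_mat n L"
    and w: "w \<in> carrier_vec n"
    and basis: "krylov_basis n L w"
    and eig: "lam ` {1..n} = {\<mu>. eigenvalue L \<mu>}"
    and dist: "inj_on lam {1..n}"
  shows "\<forall>z. pfun n L w \<theta> lam z =
     (of_real \<theta> * z + 1) * det (z^2 \<cdot>\<^sub>m 1\<^sub>m n - L)
     - z * (\<Sum>j\<in>{1..n}. (\<Sum>k\<in>{1..j}. acoef n lam (j - k) * cinner w ((L ^\<^sub>m (k - 1)) *\<^sub>v w))
                          * z ^ (2 * (n - j)))"
proof
  fix z :: complex
  have L: "L \<in> carrier_mat n n" using herm unfolding hermitian_mat_def by simp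
  let ?a = "acoef n lam"
  let ?c = "\<lambda>m. cinner w ((L ^\<^sub>m m) *\<^sub>v w)"
  let ?A = "of_real \<theta> * z + 1"
  let ?p = "\<lambda>j. pk L w \<theta> j z"
  have "pfun n L w \<theta> lam z = ?p (n + 1)
      - (\<Sum>j\<in>{1..n}. \<Sum>i\<in>{1..n}. lam i ^ n * Vinv n lam i j * ?p j)"
    unfolding pfun_def by (subst sum.swap) simp
  also have "\<dots> = ?p (n + 1) - (\<Sum>j\<in>{1..n}. (\<Sum>i\<in>{1..n}. lam i ^ n * Vinv n lam i j) * ?p j)"
    by (simp add: sum_distrib_right)
  also have "\<dots> = ?p (n + 1) - (\<Sum>j\<in>{1..n}. (- ?a (n + 1 - j)) * ?p j)"
  proof (intro arg_cong2[where f="(-)"] refl sum.cong)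
    fix j assume "j \<in> {1..n}"
    from beta[OF dist this] show "(\<Sum>i\<in>{1..n}. lam i ^ n * Vinv n lam i j) * ?p j = (- ?a (n + 1 - j)) * ?p j"
      by simp
  qed
  also have "\<dots> = ?p (Suc n) + (\<Sum>j<n. ?a (n - j) * ?p (Suc j))"
    by (simp add: sum.atLeast1_atMost_eq sum_negf)
  also have "\<dots> = (\<Sum>j\<le>n. ?a (n - j) * ?p (Suc j))"
    by (simp add: acoef0 flip: lessThan_Suc_atMost)
  also have "\<dots> = (\<Sum>j\<le>n. ?a (n - j) * (z^(2*j) * ?A - z * (\<Sum>m<j. ?c m * z^(2*(j-1-m)))))"
    by (simp only: pk_closed)
  also have "\<dots> = ?A * (\<Sum>j\<le>n. ?a (n - j) * z^(2*j))
      - z * (\<Sum>j\<le>n. \<Sum>m<j. ?a (n - j) * ?c m * z^(2*(j-1-m)))"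
    by (simp add: sum_distrib_left sum_distrib_right right_diff_distrib sum_subtractf mult_ac)
  also have "(\<Sum>j\<le>n. ?a (n - j) * z^(2*j)) = det (z^2 \<cdot>\<^sub>m 1\<^sub>m n - L)"
  proof -
    have "(\<Sum>j\<le>n. ?a (n - j) * z^(2*j)) = (\<Sum>j\<in>{0..n}. ?a (n - j) * (z^2)^j)"
      by (simp add: atMost_atLeast0 power_mult)
    also have "\<dots> = (\<Sum>m\<in>{0..n}. ?a (n - (n - m)) * (z^2)^(n - m))"
      by (subst sum.atLeastAtMost_rev) simp
    also have "\<dots> = (\<Sum>m\<le>n. ?a m * (z^2)^(n - m))"
      by (simp add: atMost_atLeast0)
    also have "\<dots> = (\<Prod>i\<in>{1..n}. z^2 - lam i)" by (rule vieta[symmetric])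
    also have "\<dots> = det (z^2 \<cdot>\<^sub>m 1\<^sub>m n - L)" by (rule det_char[OF L eig dist, symmetric])
    finally show ?thesis .
  qed
  also have "(\<Sum>j\<le>n. \<Sum>m<j. ?a (n - j) * ?c m * z^(2*(j-1-m)))
      = (\<Sum>j\<in>{1..n}. (\<Sum>k\<in>{1..j}. ?a (j - k) * ?c (k - 1)) * z ^ (2 * (n - j)))"
    by (rule double_reindex)
  finally show "pfun n L w \<theta> lam z = ?A * det (z^2 \<cdot>\<^sub>m 1\<^sub>m n - L)
     - z * (\<Sum>j\<in>{1..n}. (\<Sum>k\<in>{1..j}. ?a (j - k) * ?c (k - 1)) * z ^ (2 * (n - j)))" .
qed

end
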